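(* Let $(M_0,d,\Gamma)$ be a cone-like space. Then the metric completion $\widehat{M_0}$ of $(M_0,d)$ satisfies that $\widehat{M_0}\setminus M_0$ consists of exactly one point $\omega$.
   Context: A cone-like space is a locally compact metric space $(M_0,d)$ together with a finitely generated, non-trivial group $\Gamma$ acting freely and properly discontinuously on $M_0$ by homotheties (i.e. for each $f\in\Gamma$ there is $\rho(f)>0$ with $d(f(x),f(y))=\rho(f)d(x,y)$ for all $x,y$), such that the identity is the only element of $\Gamma$ acting as an isometry, and such that the quotient $M_0/\Gamma$ is compact. *)

theory Defs
  imports "HOL-Analysis.Analysis" "HOL-Algebra.Group_Action" "HOL-Algebra.Generated_Groups"
begin

definition acts_by_homotheties :: "('g, 'c) monoid_scheme \<Rightarrow> ('g \<Rightarrow> 'a::metric_space \<Rightarrow> 'a) \<Rightarrow> bool" where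
  "acts_by_homotheties G \<phi> \<longleftrightarrow>
     (\<forall>g \<in> carrier G. \<exists>\<rho>>0. \<forall>x y. dist (\<phi> g x) (\<phi> g y) = \<rho> * dist x y)"

definition acts_freely :: "('g, 'c) monoid_scheme \<Rightarrow> ('g \<Rightarrow> 'a \<Rightarrow> 'a) \<Rightarrow> bool" where
  "acts_freely G \<phi> \<longleftrightarrow> (\<forall>g \<in> carrier G. \<forall>x. \<phi> g x = x \<longrightarrow> g = \<one>\<^bsub>G\<^esub>)"

definition properly_discontinuous :: "('g, 'c) monoid_scheme \<Rightarrow> ('g \<Rightarrow> 'a::topological_space \<Rightarrow> 'a) \<Rightarrow> bool" where
  "properly_discontinuous G \<phi> \<longleftrightarrow>
     (\<forall>K. compact K \<longrightarrow> finite {g \<in> carrier G. \<phi> g ` K \<inter> K \<noteq> {}})"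

definition only_identity_isometry :: "('g, 'c) monoid_scheme \<Rightarrow> ('g \<Rightarrow> 'a::metric_space \<Rightarrow> 'a) \<Rightarrow> bool" where
  "only_identity_isometry G \<phi> \<longleftrightarrow>
     (\<forall>g \<in> carrier G. (\<forall>x y. dist (\<phi> g x) (\<phi> g y) = dist x y) \<longrightarrow> g = \<one>\<^bsub>G\<^esub>)"

definition compact_orbit_space :: "('g, 'c) monoid_scheme \<Rightarrow> ('g \<Rightarrow> 'a::topological_space \<Rightarrow> 'a) \<Rightarrow> bool" where
  "compact_orbit_space G \<phi> \<longleftrightarrow>
     (\<exists>Q. quotient_map (euclidean :: 'a topology) Q (orbit G \<phi>) \<and> compact_space Q)"

definition finitely_generated_group :: "('g, 'c) monoid_scheme \<Rightarrow> bool" where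
  "finitely_generated_group G \<longleftrightarrow>
     (\<exists>S. finite S \<and> S \<subseteq> carrier G \<and> generate G S = carrier G)"

text \<open>Cone-like space: the whole type 'a is M_0.\<close>
definition cone_like :: "('g, 'c) monoid_scheme \<Rightarrow> ('g \<Rightarrow> 'a::metric_space \<Rightarrow> 'a) \<Rightarrow> bool" where
  "cone_like G \<phi> \<longleftrightarrow>
     locally_compact_space (euclidean :: 'a topology) \<and>
     group G \<and> finitely_generated_group G \<and> carrier G \<noteq> {\<one>\<^bsub>G\<^esub>} \<and>
     group_action G (UNIV :: 'a set) \<phi> \<and>
     acts_freely G \<phi> \<and> properly_discontinuous G \<phi> \<and>
     acts_by_homotheties G \<phi> \<and> only_identity_isometry G \<phi> \<and>
     compact_orbit_space G \<phi>"

definition metric_completion :: "('a::metric_space \<Rightarrow> 'b::complete_space) \<Rightarrow> bool" where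
  "metric_completion i \<longleftrightarrow> (\<forall>x y. dist (i x) (i y) = dist x y) \<and> closure (range i) = UNIV"

end

theory Submission
  imports Defs
begin

lemma geom_aux: "(1::real) - r \<noteq> 0 \<Longrightarrow> d*(x - y)/(1-r) + y*d = d*(x - y*r)/(1-r)"
  by (simp add: field_simps)

lemma geom_cauchy:
  fixes z :: "nat \<Rightarrow> 'b::metric_space"
  assumes r: "0 \<le> r" "r < 1" and d: "\<And>n. dist (z n) (z (Suc n)) \<le> r^n * d"
  shows "Cauchy z"
proof -
  have "dist (z 0) (z (Suc 0)) \<le> d" using d[of 0] by simp
  then have dpos: "0 \<le> d" using zero_le_dist[of "z 0" "z (Suc 0)"] by linarith
  have bnd: "dist (z m) (z (m+k)) \<le> d * (r^m - r^(m+k)) / (1-r)" for m k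
  proof (induction k)
    case 0 then show ?case by simp
  next
    case (Suc k)
    have "dist (z m) (z (m + Suc k)) \<le> dist (z m) (z (m+k)) + dist (z (m+k)) (z (Suc (m+k)))"
      by (simp add: dist_triangle)
    also have "\<dots> \<le> d * (r^m - r^(m+k)) / (1-r) + r^(m+k) * d" using Suc d[of "m+k"] by linarith
    also have "\<dots> = d * (r^m - r^(m + Suc k)) / (1-r)"
      using geom_aux[of r d "r^m" "r^(m+k)"] r by (simp add: mult.commute)
    finally show ?case .
  qed
  have bnd2: "dist (z m) (z n) \<le> d * r^m / (1-r)" if le: "m \<le> n" for m n
  proof -
    obtain k where n: "n = m + k" using le_Suc_ex[OF le] by blast
    have "d * (r^m - r^(m+k)) / (1-r) \<le> d * r^m / (1-r)"
    proof -
      have "0 \<le> r^(m+k)" using r by simp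
      then have "d * (r^m - r^(m+k)) \<le> d * r^m" using dpos by (simp add: mult_left_mono)
      then show ?thesis using r by (simp add: divide_right_mono)
    qed
    then show ?thesis using bnd[of m k] unfolding n by linarith
  qed
  show ?thesis
  proof (rule metric_CauchyI)
    fix e :: real assume e: "0 < e"
    have "(\<lambda>m. d * r^m / (1-r)) \<longlonglongrightarrow> d * 0 / (1-r)"
      using r by (intro tendsto_intros LIMSEQ_power_zero) auto
    then have "eventually (\<lambda>m. d * r^m / (1-r) < e) sequentially"
      using e by (intro order_tendstoD(2)) auto
    then obtain M where M: "\<And>m. m \<ge> M \<Longrightarrow> d * r^m / (1-r) < e"
      unfolding eventually_sequentially by blast
    show "\<exists>M. \<forall>m\<ge>M. \<forall>n\<ge>M. dist (z m) (z n) < e"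
    proof (intro exI allI impI)
      fix m n assume "M \<le> m" "M \<le> n"
      show "dist (z m) (z n) < e"
      proof (cases "m \<le> n")
        case True then show ?thesis using bnd2[of m n] M[of m] \<open>M \<le> m\<close> by linarith
      next
        case False then show ?thesis using bnd2[of n m] M[of n] \<open>M \<le> n\<close> by (simp add: dist_commute)
      qed
    qed
  qed
qed

theorem mainTheorem2:
  fixes G :: "('g, 'c) monoid_scheme" and \<phi> :: "'g \<Rightarrow> 'a::metric_space \<Rightarrow> 'a"
    and i :: "'a \<Rightarrow> 'b::complete_space"
  assumes "cone_like G \<phi>"
    and "metric_completion i"
  shows "\<exists>\<omega>. UNIV - range i = {\<omega>}"
proof -
  have lc: "locally_compact_space (euclidean :: 'a topology)"
    and grp: "group G" and ntriv: "carrier G \<noteq> {\<one>\<^bsub>G\<^esub>}"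
    and ga: "group_action G (UNIV :: 'a set) \<phi>"
    and fr: "acts_freely G \<phi>" and pd: "properly_discontinuous G \<phi>"
    and hom: "acts_by_homotheties G \<phi>" and iso1: "only_identity_isometry G \<phi>"
    and cq: "compact_orbit_space G \<phi>"
    using assms(1) unfolding cone_like_def by auto
  have iiso: "\<And>x y. dist (i x) (i y) = dist x y" and idense: "closure (range i) = UNIV"
    using assms(2) unfolding metric_completion_def by auto
  interpret G: group G by (rule grp)
  interpret A: group_action G "UNIV :: 'a set" \<phi> by (rule ga)
  have comp: "\<phi> (g \<otimes>\<^bsub>G\<^esub> h) x = \<phi> g (\<phi> h x)" if "g \<in> carrier G" "h \<in> carrier G" for g h x
    using A.composition_rule that by simp
  have one: "\<phi> \<one>\<^bsub>G\<^esub> x = x" for x using A.id_eq_one by (metis UNIV_I restrict_apply')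
  have phinv: "\<phi> (inv\<^bsub>G\<^esub> g) (\<phi> g x) = x" "\<phi> g (\<phi> (inv\<^bsub>G\<^esub> g) x) = x"
    if "g \<in> carrier G" for g x
    using comp[of "inv\<^bsub>G\<^esub> g" g x] comp[of g "inv\<^bsub>G\<^esub> g" x] that one by auto
  obtain g0 where g0: "g0 \<in> carrier G" "g0 \<noteq> \<one>\<^bsub>G\<^esub>" using ntriv G.one_closed by blast
  define a0 :: 'a where "a0 = undefined"
  define b0 where "b0 = \<phi> g0 a0"
  have ab: "a0 \<noteq> b0" using fr g0 unfolding acts_freely_def b0_def by metis
  define \<rho> where "\<rho> g = dist (\<phi> g a0) (\<phi> g b0) / dist a0 b0" for g
  have rho: "dist (\<phi> g x) (\<phi> g y) = \<rho> g * dist x y" and rpos: "\<rho> g > 0"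
    if gG: "g \<in> carrier G" for g x y
  proof -
    obtain c where c: "c > 0" "\<And>x y. dist (\<phi> g x) (\<phi> g y) = c * dist x y"
      using hom gG unfolding acts_by_homotheties_def by blast
    have "\<rho> g = c" using c ab by (simp add: \<rho>_def)
    then show "dist (\<phi> g x) (\<phi> g y) = \<rho> g * dist x y" "\<rho> g > 0" using c by auto
  qed
  have rmult: "\<rho> (g \<otimes>\<^bsub>G\<^esub> h) = \<rho> g * \<rho> h" if "g \<in> carrier G" "h \<in> carrier G" for g h
  proof -
    have "\<rho> (g \<otimes>\<^bsub>G\<^esub> h) * dist a0 b0 = \<rho> g * \<rho> h * dist a0 b0"
      using rho[of "g \<otimes>\<^bsub>G\<^esub> h" a0 b0] rho[of g] rho[of h] comp that ab by auto
    then show ?thesis using ab by simp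
  qed
  have rone: "\<rho> \<one>\<^bsub>G\<^esub> = 1" using ab by (simp add: \<rho>_def one)
  have isoone: "g = \<one>\<^bsub>G\<^esub>" if "g \<in> carrier G" "\<rho> g = 1" for g
    using iso1 that rho unfolding only_identity_isometry_def by simp
  have rinv: "\<rho> (inv\<^bsub>G\<^esub> g) = 1 / \<rho> g" if "g \<in> carrier G" for g
    using rmult[of g "inv\<^bsub>G\<^esub> g"] rpos[OF that] that rone by (simp add: field_simps)
  have commute: "g \<otimes>\<^bsub>G\<^esub> h = h \<otimes>\<^bsub>G\<^esub> g" if "g \<in> carrier G" "h \<in> carrier G" for g h
  proof -
    have "\<rho> ((g \<otimes>\<^bsub>G\<^esub> h) \<otimes>\<^bsub>G\<^esub> inv\<^bsub>G\<^esub> (h \<otimes>\<^bsub>G\<^esub> g)) = 1"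
      using that rmult rinv rpos[of g] rpos[of h] by simp
    then have "(g \<otimes>\<^bsub>G\<^esub> h) \<otimes>\<^bsub>G\<^esub> inv\<^bsub>G\<^esub> (h \<otimes>\<^bsub>G\<^esub> g) = \<one>\<^bsub>G\<^esub>"
      using isoone that by simp
    then have "inv\<^bsub>G\<^esub> (inv\<^bsub>G\<^esub> (h \<otimes>\<^bsub>G\<^esub> g)) = g \<otimes>\<^bsub>G\<^esub> h"
      using that by (intro G.inv_equality) auto
    then show ?thesis using that by simp
  qed
  obtain f where f: "f \<in> carrier G" "\<rho> f < 1"
  proof (cases "\<rho> g0 < 1")
    case True then show ?thesis using that g0 by blast
  next
    case False
    have "\<rho> g0 \<noteq> 1" using isoone g0 by blast
    then have "\<rho> g0 > 1" using False by simp
    then have "\<rho> (inv\<^bsub>G\<^esub> g0) < 1" using rinv g0 by simp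
    then show ?thesis using that g0 by blast
  qed
  define r where "r = \<rho> f"
  have r: "0 < r" "r < 1" using f rpos r_def by auto
  define F where "F n = \<phi> f ^^ n" for n
  have Fdist: "dist (F n x) (F n y) = r^n * dist x y" for n x y
    by (induction n) (simp_all add: F_def rho f r_def)
  have Fcomm: "F n (\<phi> g x) = \<phi> g (F n x)" if "g \<in> carrier G" for n g x
  proof (induction n)
    case 0 then show ?case by (simp add: F_def)
  next
    case (Suc n)
    have "F (Suc n) (\<phi> g x) = \<phi> f (\<phi> g (F n x))" using Suc by (simp add: F_def)
    also have "\<dots> = \<phi> g (\<phi> f (F n x))"
      using commute[OF f(1) that] comp[OF f(1) that] comp[OF that f(1)] by metis
    finally show ?case by (simp add: F_def)
  qed
  have "Cauchy (\<lambda>n. i (F n a0))"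
  proof (rule geom_cauchy[of r _ "dist a0 (\<phi> f a0)"])
    fix n
    have "F (Suc n) a0 = F n (\<phi> f a0)" by (simp add: F_def funpow_swap1)
    then show "dist (i (F n a0)) (i (F (Suc n) a0)) \<le> r ^ n * dist a0 (\<phi> f a0)"
      by (simp add: iiso Fdist)
  qed (use r in auto)
  then obtain \<omega> where om: "(\<lambda>n. i (F n a0)) \<longlonglongrightarrow> \<omega>"
    using Cauchy_convergent_iff convergent_def by blast
  have omx: "(\<lambda>n. i (F n x)) \<longlonglongrightarrow> \<omega>" for x
  proof -
    have "(\<lambda>n. r^n) \<longlonglongrightarrow> 0" using r by (intro LIMSEQ_power_zero) simp
    then have "(\<lambda>n. r^n * dist x a0) \<longlonglongrightarrow> 0" by (rule tendsto_mult_left_zero)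
    then have t1: "(\<lambda>n. dist (i (F n x)) (i (F n a0))) \<longlonglongrightarrow> 0" by (simp add: iiso Fdist)
    have t2: "(\<lambda>n. dist (i (F n a0)) \<omega>) \<longlonglongrightarrow> 0" using tendsto_dist_iff[THEN iffD1, OF om] .
    have t3: "(\<lambda>n. dist (i (F n x)) (i (F n a0)) + dist (i (F n a0)) \<omega>) \<longlonglongrightarrow> 0"
      using tendsto_add[OF t1 t2] by simp
    have "(\<lambda>n. dist (i (F n x)) \<omega>) \<longlonglongrightarrow> 0"
      by (rule tendsto_sandwich[of "\<lambda>n. 0" _ _ "\<lambda>n. dist (i (F n x)) (i (F n a0)) + dist (i (F n a0)) \<omega>"])
        (simp, rule always_eventually, simp add: dist_triangle, simp, rule t3)
    then show ?thesis by (simp only: tendsto_dist_iff[of _ \<omega>])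
  qed
  define e where "e x = dist (i x) \<omega>" for x
  have escale: "e (\<phi> g x) = \<rho> g * e x" if g: "g \<in> carrier G" for g x
  proof -
    have "(\<lambda>n. dist (i (F n (\<phi> g x))) (i (\<phi> g x))) \<longlonglongrightarrow> dist \<omega> (i (\<phi> g x))"
      by (intro tendsto_intros omx)
    moreover have "(\<lambda>n. dist (i (F n (\<phi> g x))) (i (\<phi> g x))) = (\<lambda>n. \<rho> g * dist (i (F n x)) (i x))"
      using Fcomm[OF g] rho[OF g] iiso by simp
    moreover have "(\<lambda>n. \<rho> g * dist (i (F n x)) (i x)) \<longlonglongrightarrow> \<rho> g * dist \<omega> (i x)"
      by (intro tendsto_intros omx)
    ultimately show ?thesis unfolding e_def by (metis LIMSEQ_unique dist_commute)
  qed
  have iinj: "x = y" if "i x = i y" for x y using iiso[of x y] that by simp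
  have omnot: "\<omega> \<notin> range i"
  proof
    assume "\<omega> \<in> range i" then obtain p where p: "\<omega> = i p" by auto
    have "e p = 0" using p e_def by simp
    then have "e (\<phi> f p) = 0" using escale f by simp
    then have "\<phi> f p = p" using p e_def iinj by simp
    then have "f = \<one>\<^bsub>G\<^esub>" using fr f unfolding acts_freely_def by blast
    then show False using f rone by simp
  qed
  have cont: "continuous_on UNIV (\<phi> g)" if gG: "g \<in> carrier G" for g
  proof -
    have "(\<rho> g)-lipschitz_on UNIV (\<phi> g)"
      using rho[OF gG] rpos[OF gG] by (intro lipschitz_onI) auto
    then show ?thesis by (rule lipschitz_on_continuous_on)
  qed
  have img_open: "open (\<phi> g ` V)" if gG: "g \<in> carrier G" and V: "open V" for g V
  proof -
    have ig: "inv\<^bsub>G\<^esub> g \<in> carrier G" using gG by simp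
    have eq1: "\<phi> g ` V \<subseteq> \<phi> (inv\<^bsub>G\<^esub> g) -` V \<inter> UNIV"
      using phinv(1)[OF gG] by auto
    have eq2: "\<phi> (inv\<^bsub>G\<^esub> g) -` V \<inter> UNIV \<subseteq> \<phi> g ` V"
    proof
      fix y assume "y \<in> \<phi> (inv\<^bsub>G\<^esub> g) -` V \<inter> UNIV"
      then have "\<phi> (inv\<^bsub>G\<^esub> g) y \<in> V" by simp
      moreover have "y = \<phi> g (\<phi> (inv\<^bsub>G\<^esub> g) y)" using phinv(2)[OF gG] by simp
      ultimately show "y \<in> \<phi> g ` V" by (rule rev_image_eqI)
    qed
    have eq: "\<phi> g ` V = \<phi> (inv\<^bsub>G\<^esub> g) -` V \<inter> UNIV" using eq1 eq2 by (rule equalityI)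
    have "open (\<phi> (inv\<^bsub>G\<^esub> g) -` V \<inter> UNIV)"
      using continuous_on_open_vimage[OF open_UNIV, THEN iffD1, OF cont[OF ig], rule_format, OF V] .
    then show ?thesis unfolding eq .
  qed
  have orb: "orbit G \<phi> (\<phi> g x) = orbit G \<phi> x" if gG: "g \<in> carrier G" for g x
  proof (intro Set.set_eqI iffI)
    fix y assume "y \<in> orbit G \<phi> (\<phi> g x)"
    then obtain h where h: "h \<in> carrier G" "y = \<phi> h (\<phi> g x)" unfolding orbit_def by auto
    then have "y = \<phi> (h \<otimes>\<^bsub>G\<^esub> g) x" using comp gG by simp
    then show "y \<in> orbit G \<phi> x" unfolding orbit_def using h gG by auto
  next
    fix y assume "y \<in> orbit G \<phi> x"
    then obtain h where h: "h \<in> carrier G" "y = \<phi> h x" unfolding orbit_def by auto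
    have "y = \<phi> (h \<otimes>\<^bsub>G\<^esub> inv\<^bsub>G\<^esub> g) (\<phi> g x)" using comp gG h phinv(1)[OF gG] by simp
    then show "y \<in> orbit G \<phi> (\<phi> g x)" unfolding orbit_def using h gG by auto
  qed
  have lcx: "\<exists>t>0. compact (cball x (2 * t))" for x :: 'a
  proof -
    have "\<exists>U C. open U \<and> compact C \<and> x \<in> U \<and> U \<subseteq> C"
      using lc unfolding locally_compact_space_def by simp
    then obtain U C where UC: "open U" "compact C" "x \<in> U" "U \<subseteq> C" by blast
    obtain t where t: "t > 0" "ball x t \<subseteq> U" using UC(1,3) unfolding open_contains_ball by blast
    have "cball x (t/2) \<subseteq> ball x t" using t(1) by (auto simp: subset_eq)
    then have "cball x (t/2) \<subseteq> C" using t(2) UC(4) by (meson subset_trans)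
    then have "C \<inter> cball x (t/2) = cball x (t/2)" by (rule Int_absorb1)
    moreover have "compact (C \<inter> cball x (t/2))" using compact_Int_closed[OF UC(2) closed_cball] .
    ultimately have "compact (cball x (2 * (t/4)))" by simp
    then show ?thesis using t(1) by (intro exI[of _ "t/4"]) simp
  qed
  have "\<forall>x::'a. \<exists>t. t > 0 \<and> compact (cball x (2 * t))" by (intro allI) (rule lcx)
  then have "\<exists>s. \<forall>x::'a. s x > 0 \<and> compact (cball x (2 * s x))" by (rule choice)
  then obtain s where s0: "\<forall>x::'a. s x > 0 \<and> compact (cball x (2 * s x))" by (elim exE)
  have s: "\<And>x::'a. s x > 0" "\<And>x::'a. compact (cball x (2 * s x))" using s0 by simp_all
  from cq obtain Q where qm: "quotient_map euclidean Q (orbit G \<phi>)" and cs: "compact_space Q"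
    unfolding compact_orbit_space_def by blast
  have topQ: "topspace Q = range (orbit G \<phi>)" using qm unfolding quotient_map_def by simp
  have sat: "{y. y \<in> topspace euclidean \<and> orbit G \<phi> y \<in> orbit G \<phi> ` V} = (\<Union>g\<in>carrier G. \<phi> g ` V)" for V
  proof (intro Set.set_eqI iffI)
    fix y assume "y \<in> {y. y \<in> topspace euclidean \<and> orbit G \<phi> y \<in> orbit G \<phi> ` V}"
    then obtain v where v: "v \<in> V" "orbit G \<phi> y = orbit G \<phi> v" by auto
    have "y \<in> orbit G \<phi> y" using A.orbit_refl by simp
    then have "y \<in> orbit G \<phi> v" using v(2) by simp
    then obtain g where "g \<in> carrier G" "y = \<phi> g v" unfolding orbit_def by auto
    then show "y \<in> (\<Union>g\<in>carrier G. \<phi> g ` V)" using v(1) by auto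
  next
    fix y assume "y \<in> (\<Union>g\<in>carrier G. \<phi> g ` V)"
    then obtain g v where "g \<in> carrier G" "v \<in> V" "y = \<phi> g v" by auto
    then show "y \<in> {y. y \<in> topspace euclidean \<and> orbit G \<phi> y \<in> orbit G \<phi> ` V}" using orb by auto
  qed
  have openQ: "openin Q (orbit G \<phi> ` V)" if V: "open V" for V
  proof -
    have "open (\<Union>g\<in>carrier G. \<phi> g ` V)" using img_open V by auto
    then have "openin euclidean {y. y \<in> topspace euclidean \<and> orbit G \<phi> y \<in> orbit G \<phi> ` V}"
      unfolding sat by simp
    moreover have "orbit G \<phi> ` V \<subseteq> topspace Q" using topQ by auto
    ultimately show ?thesis using qm unfolding quotient_map_def by blast
  qed
  have cov: "topspace Q \<subseteq> \<Union>((\<lambda>x. orbit G \<phi> ` ball x (s x)) ` UNIV)"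
  proof
    fix q assume "q \<in> topspace Q"
    then obtain y where y: "q = orbit G \<phi> y" using topQ by auto
    have "y \<in> ball y (s y)" using s(1)[of y] by simp
    then show "q \<in> \<Union>((\<lambda>x. orbit G \<phi> ` ball x (s x)) ` UNIV)" using y by blast
  qed
  have "compactin Q (topspace Q)" using cs by (simp add: compact_space_def)
  then have ci: "\<forall>U. (\<forall>x\<in>U. openin Q x) \<and> topspace Q \<subseteq> \<Union>U \<longrightarrow> (\<exists>F. finite F \<and> F \<subseteq> U \<and> topspace Q \<subseteq> \<Union>F)"
    unfolding compactin_def by (elim conjE)
  have ocov: "\<forall>x\<in>(\<lambda>x. orbit G \<phi> ` ball x (s x)) ` UNIV. openin Q x" using openQ by auto
  obtain FF0 where FF0: "finite FF0" "FF0 \<subseteq> (\<lambda>x. orbit G \<phi> ` ball x (s x)) ` UNIV"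
      "topspace Q \<subseteq> \<Union>FF0"
    using ci[rule_format, OF conjI[OF ocov cov]] by blast
  then obtain T where T: "finite T" "topspace Q \<subseteq> (\<Union>x\<in>T. orbit G \<phi> ` ball x (s x))"
    using finite_subset_image[OF FF0(1,2)] by blast
  have cover: "\<exists>g\<in>carrier G. \<exists>x\<in>T. \<exists>k\<in>cball x (s x). y = \<phi> g k" for y
  proof -
    have "orbit G \<phi> y \<in> topspace Q" using topQ by simp
    then obtain x v where xv: "x \<in> T" "v \<in> ball x (s x)" "orbit G \<phi> y = orbit G \<phi> v" using T(2) by blast
    have "y \<in> orbit G \<phi> y" using A.orbit_refl by simp
    then have "y \<in> orbit G \<phi> v" using xv(3) by simp
    then obtain g where "g \<in> carrier G" "y = \<phi> g v" unfolding orbit_def by auto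
    then show ?thesis using xv(1,2) by force
  qed
  have coverK: "\<exists>g\<in>carrier G. \<exists>k\<in>(\<Union>x\<in>T. cball x (s x)). y = \<phi> g k" for y
  proof -
    obtain g x k where "g \<in> carrier G" "x \<in> T" "k \<in> cball x (s x)" "y = \<phi> g k"
      using cover[of y] by blast
    then show ?thesis by blast
  qed
  define K where "K = (\<Union>x\<in>T. cball x (s x))"
  define U where "U = (\<Union>x\<in>T. cball x (2 * s x))"
  have Tne: "T \<noteq> {}" using cover[of a0] by blast
  define \<delta> where "\<delta> = Min (s ` T)"
  have \<delta>pos: "\<delta> > 0" unfolding \<delta>_def using T(1) Tne s(1) by (subst Min_gr_iff) auto
  have \<delta>le: "\<delta> \<le> s x" if xT: "x \<in> T" for x unfolding \<delta>_def using T(1) xT by simp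
  have cbs: "cball x (s x) \<subseteq> cball x (2 * s x)" for x
    using s(1)[of x] by (intro subset_cball) simp
  have cbK: "cball x (s x) = cball x (2 * s x) \<inter> cball x (s x)" for x
    using cbs[of x] by (rule Int_absorb1[symmetric])
  have compK: "compact K" unfolding K_def
  proof (rule compact_UN[OF T(1)])
    fix x assume "x \<in> T"
    show "compact (cball x (s x))" by (subst cbK) (rule compact_Int_closed[OF s(2) closed_cball])
  qed
  have compU: "compact U" unfolding U_def using T(1) s(2) by (intro compact_UN) auto
  have KU: "K \<subseteq> U" unfolding K_def U_def using cbs by (intro UN_mono) auto
  have thick: "y \<in> U" if kK: "k \<in> K" and dy: "dist y k < \<delta>" for y k
  proof -
    from kK obtain x where x: "x \<in> T" "dist x k \<le> s x" unfolding K_def by auto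
    have "dist x y \<le> dist x k + dist k y" by (rule dist_triangle)
    then have "dist x y \<le> 2 * s x" using x \<delta>le[OF x(1)] dy by (simp add: dist_commute)
    then show ?thesis using x(1) unfolding U_def by auto
  qed
  define M where "M = 1 + (\<Sum>x\<in>T. e x + s x)"
  have Mnn: "0 \<le> (\<Sum>x\<in>T. e x + s x)" using s(1) by (intro sum_nonneg) (simp add: e_def less_imp_le)
  have Mpos: "M > 0" using Mnn unfolding M_def by simp
  have Mbound: "e k \<le> M" if kK: "k \<in> K" for k
  proof -
    from kK obtain x where x: "x \<in> T" "dist x k \<le> s x" unfolding K_def by auto
    have "dist (i k) \<omega> \<le> dist (i k) (i x) + dist (i x) \<omega>" by (rule dist_triangle)
    then have "e k \<le> e x + dist x k" unfolding e_def using iiso[of k x] by (simp add: dist_commute)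
    then have "e k \<le> e x + s x" using x(2) by linarith
    also have "\<dots> \<le> (\<Sum>x\<in>T. e x + s x)"
      using T(1) x(1) s(1) by (intro member_le_sum) (auto simp: e_def less_imp_le)
    finally show ?thesis unfolding M_def by linarith
  qed
  have finFF: "finite {g \<in> carrier G. \<phi> g ` U \<inter> U \<noteq> {}}"
    using pd compU unfolding properly_discontinuous_def by blast
  have uniq: "z = \<omega>" if zn: "z \<notin> range i" for z
  proof (rule ccontr)
    assume ne: "z \<noteq> \<omega>"
    have "z \<in> closure (range i)" using idense by simp
    then obtain y where y: "\<And>n. y n \<in> range i" "y \<longlonglongrightarrow> z" unfolding closure_sequential by blast
    define x where "x n = (SOME p. y n = i p)" for n
    have xy: "i (x n) = y n" for n
    proof -
      have "\<exists>p. y n = i p" using y(1)[of n] by auto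
      then have "y n = i (x n)" unfolding x_def by (rule someI_ex)
      then show ?thesis by simp
    qed
    have xl: "(\<lambda>n. i (x n)) \<longlonglongrightarrow> z" using y(2) by (simp add: xy)
    define g where "g n = (SOME g. g \<in> carrier G \<and> (\<exists>k\<in>K. x n = \<phi> g k))" for n
    have gP: "g n \<in> carrier G \<and> (\<exists>k\<in>K. x n = \<phi> (g n) k)" for n
      unfolding g_def by (rule someI_ex) (use coverK[of "x n"] K_def in blast)
    define k where "k n = (SOME k. k \<in> K \<and> x n = \<phi> (g n) k)" for n
    have kP: "k n \<in> K \<and> x n = \<phi> (g n) (k n)" for n
      unfolding k_def by (rule someI_ex) (use gP[of n] in blast)
    have gG: "g n \<in> carrier G" and kK: "k n \<in> K" and xgk: "x n = \<phi> (g n) (k n)" for n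
      using gP[of n] kP[of n] by auto
    define c where "c = dist z \<omega>"
    have cpos: "c > 0" using ne unfolding c_def by simp
    have "(\<lambda>n. e (x n)) \<longlonglongrightarrow> c" unfolding e_def c_def by (intro tendsto_intros xl)
    then have ev1: "eventually (\<lambda>n. e (x n) > c/2) sequentially"
      using cpos by (intro order_tendstoD(1)) auto
    define \<alpha> where "\<alpha> = c / (2*M)"
    have \<alpha>pos: "\<alpha> > 0" using cpos Mpos unfolding \<alpha>_def by simp
    have rg: "\<rho> (g n) \<ge> \<alpha>" if en: "e (x n) > c/2" for n
    proof -
      have "e (x n) = \<rho> (g n) * e (k n)" using xgk[of n] escale[OF gG[of n]] by simp
      also have "\<dots> \<le> \<rho> (g n) * M" using Mbound[OF kK[of n]] rpos[OF gG[of n]] by (intro mult_left_mono) auto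
      finally have "c/2 < \<rho> (g n) * M" using en by linarith
      then have "c < 2 * M * \<rho> (g n)" by (simp add: field_simps)
      then show ?thesis unfolding \<alpha>_def using Mpos by (simp add: divide_le_eq mult.commute)
    qed
    obtain N2 where N2: "\<And>n. n \<ge> N2 \<Longrightarrow> \<rho> (g n) \<ge> \<alpha>"
      using ev1 rg unfolding eventually_sequentially by blast
    have "Cauchy (\<lambda>n. i (x n))" using xl by (rule LIMSEQ_imp_Cauchy)
    then have "Cauchy x" unfolding Cauchy_def by (simp add: iiso)
    then obtain N1 where N1: "\<forall>m\<ge>N1. \<forall>n\<ge>N1. dist (x m) (x n) < \<alpha> * \<delta>"
      using metric_CauchyD[of x "\<alpha>*\<delta>"] \<alpha>pos \<delta>pos by auto
    define N where "N = max N1 N2"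
    define h where "h = inv\<^bsub>G\<^esub> (g N)"
    have hG: "h \<in> carrier G" unfolding h_def using gG by simp
    have inFF: "h \<otimes>\<^bsub>G\<^esub> g n \<in> {g \<in> carrier G. \<phi> g ` U \<inter> U \<noteq> {}}" if nN: "n \<ge> N" for n
    proof -
      have hgG: "h \<otimes>\<^bsub>G\<^esub> g n \<in> carrier G" using hG gG by simp
      have y1: "\<phi> h (x n) = \<phi> (h \<otimes>\<^bsub>G\<^esub> g n) (k n)" using xgk[of n] comp[OF hG gG[of n]] by simp
      have y2: "\<phi> h (x N) = k N" unfolding h_def using xgk[of N] phinv(1)[OF gG[of N]] by simp
      have "dist (\<phi> h (x n)) (\<phi> h (x N)) = \<rho> h * dist (x n) (x N)" using rho[OF hG] by blast
      also have "\<rho> h = 1 / \<rho> (g N)" unfolding h_def using rinv gG by simp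
      finally have dd: "dist (\<phi> h (x n)) (k N) = dist (x n) (x N) / \<rho> (g N)" using y2 by simp
      have "dist (x n) (x N) < \<alpha> * \<delta>" using N1 nN unfolding N_def by auto
      moreover have "\<alpha> * \<delta> \<le> \<rho> (g N) * \<delta>" using N2[of N] \<delta>pos unfolding N_def by (intro mult_right_mono) auto
      ultimately have "dist (x n) (x N) < \<rho> (g N) * \<delta>" by linarith
      then have "dist (\<phi> h (x n)) (k N) < \<delta>" unfolding dd using rpos[OF gG[of N]] by (simp add: divide_less_eq mult.commute)
      then have "\<phi> h (x n) \<in> U" using thick kK by blast
      moreover have "\<phi> h (x n) \<in> \<phi> (h \<otimes>\<^bsub>G\<^esub> g n) ` U" using y1 kK[of n] KU by auto
      ultimately show ?thesis using hgG by blast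
    qed
    have sub: "g ` {N..} \<subseteq> (\<lambda>q. g N \<otimes>\<^bsub>G\<^esub> q) ` {g \<in> carrier G. \<phi> g ` U \<inter> U \<noteq> {}}"
    proof
      fix q assume "q \<in> g ` {N..}"
      then obtain n where n: "n \<ge> N" "q = g n" by auto
      have "g N \<otimes>\<^bsub>G\<^esub> (h \<otimes>\<^bsub>G\<^esub> g n) = (g N \<otimes>\<^bsub>G\<^esub> h) \<otimes>\<^bsub>G\<^esub> g n"
        using gG[of N] gG[of n] hG by (simp add: G.m_assoc)
      also have "\<dots> = g n" unfolding h_def using gG[of N] gG[of n] by simp
      finally have e1: "q = g N \<otimes>\<^bsub>G\<^esub> (h \<otimes>\<^bsub>G\<^esub> g n)" using n(2) by simp
      show "q \<in> (\<lambda>q. g N \<otimes>\<^bsub>G\<^esub> q) ` {g \<in> carrier G. \<phi> g ` U \<inter> U \<noteq> {}}"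
        using inFF[OF n(1)] e1 by (rule rev_image_eqI)
    qed
    have fin: "finite (g ` {N..})" using finite_subset[OF sub finite_imageI[OF finFF]] .
    obtain n0 where n0: "n0 \<in> {N..}" "infinite {n \<in> {N..}. g n = g n0}"
      using pigeonhole_infinite[OF infinite_Ici fin] by blast
    obtain q :: "nat \<Rightarrow> nat" where q: "strict_mono q" "\<forall>n. q n \<in> {n \<in> {N..}. g n = g n0}"
      using infinite_enumerate[OF n0(2)] by blast
    have "\<forall>n. (k \<circ> q) n \<in> K" using kK by simp
    then obtain l t where lt: "l \<in> K" "strict_mono t" "((k \<circ> q) \<circ> t) \<longlonglongrightarrow> l"
      using seq_compactE[OF compact_imp_seq_compact[OF compK]] by blast
    have A0: "(\<lambda>n. \<phi> (g n0) (((k \<circ> q) \<circ> t) n)) \<longlonglongrightarrow> \<phi> (g n0) l"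
      by (rule continuous_on_tendsto_compose[OF cont[OF gG[of n0]] lt(3)]) auto
    have eqs: "(\<lambda>n. \<phi> (g n0) (((k \<circ> q) \<circ> t) n)) = x \<circ> (q \<circ> t)"
    proof
      fix n
      have "g (q (t n)) = g n0" using q(2) by simp
      then show "\<phi> (g n0) (((k \<circ> q) \<circ> t) n) = (x \<circ> (q \<circ> t)) n" using xgk[of "q (t n)"] by simp
    qed
    have A: "(x \<circ> (q \<circ> t)) \<longlonglongrightarrow> \<phi> (g n0) l" using A0 unfolding eqs .
    have "(\<lambda>n. dist ((x \<circ> (q \<circ> t)) n) (\<phi> (g n0) l)) \<longlonglongrightarrow> 0"
      using tendsto_dist_iff[THEN iffD1, OF A] .
    then have "(\<lambda>n. dist (i ((x \<circ> (q \<circ> t)) n)) (i (\<phi> (g n0) l))) \<longlonglongrightarrow> 0" by (simp only: iiso)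
    then have B: "(\<lambda>n. i ((x \<circ> (q \<circ> t)) n)) \<longlonglongrightarrow> i (\<phi> (g n0) l)"
      by (simp only: tendsto_dist_iff[of _ "i (\<phi> (g n0) l)"])
    have C: "(\<lambda>n. i ((x \<circ> (q \<circ> t)) n)) \<longlonglongrightarrow> z"
      using LIMSEQ_subseq_LIMSEQ[OF xl strict_mono_o[OF q(1) lt(2)]] by (simp add: comp_def)
    have "z = i (\<phi> (g n0) l)" using LIMSEQ_unique[OF C B] .
    then show False using zn by auto
  qed
  show ?thesis using uniq omnot by blast
qed

end
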